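(* Let $S^2\subset\mathbb{R}^3$ be the round unit sphere, let $l\colon S^3\to T^1S^2$ be the $2:1$ covering map described in the context, and let $\gamma(t)=(\cos t,\sin t,0)$, $t\in\mathbb{R}/2\pi\mathbb{Z}$, be the positively oriented equator. Let $p\in\mathbb{N}$, $q\in\mathbb{N}_0$ be coprime and let $\gamma_{p,q}$ be a $(p,q)$-satellite of $\gamma$. Then the lift of $\gamma_{p,q}$ under $l$ (i.e. a closed curve in $S^3$ projecting under $l$ onto the tangent lift of $\gamma_{p,q}$, traversed twice when $p$ is odd) is homotopic in $S^3\setminus l^{-1}(\gamma,\dot\gamma)=S^3\setminus\{(z,0):|z|=1\}$ to the curve \[t\mapsto \big(c_1e^{i\frac{pt}{2}},\,c_2e^{i\frac{(p-2q)t}{2}}\big),\] for any $c_1,c_2\in\mathbb{R}_{>0}$ with $c_1^2+c_2^2=1$, where $t$ ranges over $\mathbb{R}/2\pi\mathbb{Z}$ if $p$ is even and over $\mathbb{R}/4\pi\mathbb{Z}$ if $p$ is odd.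
   Context: Write $S^3=\{(r_1e^{it_1},r_2e^{it_2}): r_1,r_2\in[0,1],\ r_1^2+r_2^2=1,\ t_1,t_2\in\mathbb{R}/2\pi\mathbb{Z}\}\subset\mathbb{C}^2$, and $T^1S^2=\{(x,u): x\in S^2,\ u\in T_xS^2,\ |u|=1\}$. Euler angles: for $u\in T^1S^2$ not tangent (in either direction) to the equator $\{z=0\}$, $u$ determines an oriented great circle meeting the equator in two points; let $p$ be the one at which the great circle enters the upper hemisphere. Let $\phi(u)\in\mathbb{R}/2\pi\mathbb{Z}$ be the angle between the $x$-axis and $p$, $\theta(u)\in\mathbb{R}/2\pi\mathbb{Z}$ the angle along the oriented great circle from $p$ to the basepoint of $u$, and $\nu(u)\in(0,\pi)$ the angle at $p$ between the tangent of the positively oriented equator and the tangent of the oriented great circle. Then $\Phi_1(u)=(\phi,\theta,\nu)$ is a diffeomorphism from $T^1S^2$ minus the tangent lifts of the two oriented equators onto $\mathbb{R}/2\pi\mathbb{Z}\times\mathbb{R}/2\pi\mathbb{Z}\times(0,\pi)$. Let $\Phi_2(r_1e^{it_1},r_2e^{it_2})=(t_1+t_2,\,t_1-t_2,\,2\arccos r_1)$ on $S^3\setminus\{(z,0),(0,z)\}$. The map $l$ is the smooth extension of $\Phi_1^{-1}\circ\Phi_2$ to all of $S^3$, sending $(e^{it},0)$ to the (doubly traversed) tangent lift of the positively oriented equator and $(0,e^{-it})$ to that of the negatively oriented equator; it is a $2:1$ covering. Satellites: for a regular closed curve $c$ on a surface $S$ its tangent lift is $t\mapsto (c(t),\dot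 c(t)/|\dot c(t)|)\in T^1S$. Let $\gamma\colon\mathbb{R}/2\pi\mathbb{Z}\to S$ be a regular curve with a unit normal field $\eta(t)$ along it, and let $p\in\mathbb{N}$, $q\in\mathbb{N}_0$ be coprime. A curve on $S$ is a $(p,q)$-satellite of $\gamma$ if its tangent lift is homotopic, through tangent lifts of immersed curves, in $T^1S$ minus the tangent lift of $\gamma$, to the tangent lift of $t\mapsto \exp_{\gamma(pt)}(\epsilon\sin(qt)\,\eta(pt))$, $t\in\mathbb{R}/2\pi\mathbb{Z}$, for small $\epsilon>0$. *)

theory Defs
  imports "HOL-Analysis.Analysis"
begin

definition vec3 :: "real \<Rightarrow> real \<Rightarrow> real \<Rightarrow> real^3" where
  "vec3 a b c = (\<chi> i. if i = 1 then a else if i = 2 then b else c)"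

definition S2 :: "(real^3) set" where
  "S2 = sphere 0 1"

definition S3 :: "(complex \<times> complex) set" where
  "S3 = sphere 0 1"

definition T1S2 :: "((real^3) \<times> (real^3)) set" where
  "T1S2 = {(x, u). x \<in> S2 \<and> x \<bullet> u = 0 \<and> norm u = 1}"

text \<open>Inverse of the Euler angle chart Phi_1: (phi, theta, nu) gives the unit tangent
  vector at the point reached after angle theta along the oriented great circle through
  p = (cos phi, sin phi, 0) whose tangent at p makes angle nu with the positive equator.\<close>
definition euler_inv :: "real \<Rightarrow> real \<Rightarrow> real \<Rightarrow> (real^3) \<times> (real^3)" where
  "euler_inv \<phi> \<theta> \<nu> =
    (let p = vec3 (cos \<phi>) (sin \<phi>) 0;
         w = cos \<nu> *\<^sub>R vec3 (- sin \<phi>) (cos \<phi>) 0 + sin \<nu> *\<^sub>R vec3 0 0 1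
     in (cos \<theta> *\<^sub>R p + sin \<theta> *\<^sub>R w, - sin \<theta> *\<^sub>R p + cos \<theta> *\<^sub>R w))"

text \<open>The covering map l = Phi_1^{-1} o Phi_2, with Phi_2(r1 e^{i t1}, r2 e^{i t2}) =
  (t1+t2, t1-t2, 2 arccos r1).  The formula is well defined on all of S^3 (when r1 = 0 or
  r2 = 0 it does not depend on the undetermined argument) and coincides there with the
  smooth extension; in coordinates it equals
  ((z1^2+z2^2, 2 Im(z1 cnj z2)), (i(z1^2-z2^2), 2 Re(z1 cnj z2))).\<close>
definition lmap :: "complex \<times> complex \<Rightarrow> (real^3) \<times> (real^3)" where
  "lmap z = euler_inv (Arg (fst z) + Arg (snd z)) (Arg (fst z) - Arg (snd z))
                      (2 * arccos (norm (fst z)))"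

definition regular_closed_curve_S2 :: "(real \<Rightarrow> real^3) \<Rightarrow> bool" where
  "regular_closed_curve_S2 c \<longleftrightarrow>
     (\<forall>t. c (t + 2*pi) = c t) \<and> (\<forall>t. c t \<in> S2) \<and>
     (\<exists>c'. (\<forall>t. (c has_vector_derivative c' t) (at t)) \<and> continuous_on UNIV c' \<and>
           (\<forall>t. c' t \<noteq> 0))"

definition tangent_lift :: "(real \<Rightarrow> real^3) \<Rightarrow> real \<Rightarrow> (real^3) \<times> (real^3)" where
  "tangent_lift c t = (c t, (1 / norm (vector_derivative c (at t))) *\<^sub>R vector_derivative c (at t))"

definition equator :: "real \<Rightarrow> real^3" where
  "equator t = vec3 (cos t) (sin t) 0"

definition sphere_exp :: "real^3 \<Rightarrow> real^3 \<Rightarrow> real^3" where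
  "sphere_exp x v = (if v = 0 then x else cos (norm v) *\<^sub>R x + (sin (norm v) / norm v) *\<^sub>R v)"

definition unit_normal_field :: "(real \<Rightarrow> real^3) \<Rightarrow> (real \<Rightarrow> real^3) \<Rightarrow> bool" where
  "unit_normal_field \<gamma> \<eta> \<longleftrightarrow> continuous_on UNIV \<eta> \<and> (\<forall>t. \<eta> (t + 2*pi) = \<eta> t) \<and>
     (\<forall>t. norm (\<eta> t) = 1 \<and> \<eta> t \<bullet> \<gamma> t = 0 \<and> \<eta> t \<bullet> vector_derivative \<gamma> (at t) = 0)"

definition model_satellite ::
  "(real \<Rightarrow> real^3) \<Rightarrow> (real \<Rightarrow> real^3) \<Rightarrow> nat \<Rightarrow> nat \<Rightarrow> real \<Rightarrow> real \<Rightarrow> real^3" where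
  "model_satellite \<gamma> \<eta> p q \<epsilon> t =
     sphere_exp (\<gamma> (real p * t)) ((\<epsilon> * sin (real q * t)) *\<^sub>R \<eta> (real p * t))"

definition lift_homotopic ::
  "(real \<Rightarrow> real^3) \<Rightarrow> (real \<Rightarrow> real^3) \<Rightarrow> (real \<Rightarrow> real^3) \<Rightarrow> bool" where
  "lift_homotopic \<gamma> a b \<longleftrightarrow>
     (\<exists>c :: real \<Rightarrow> real \<Rightarrow> real^3.
        c 0 = a \<and> c 1 = b \<and>
        (\<forall>s\<in>{0..1}. regular_closed_curve_S2 (c s)) \<and>
        continuous_on ({0..1} \<times> UNIV) (\<lambda>(s, t). tangent_lift (c s) t) \<and>
        (\<forall>s\<in>{0..1}. \<forall>t. tangent_lift (c s) t \<in> T1S2 - range (tangent_lift \<gamma>)))"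

definition is_satellite ::
  "(real \<Rightarrow> real^3) \<Rightarrow> (real \<Rightarrow> real^3) \<Rightarrow> nat \<Rightarrow> nat \<Rightarrow> (real \<Rightarrow> real^3) \<Rightarrow> bool" where
  "is_satellite \<gamma> \<eta> p q c \<longleftrightarrow>
     regular_closed_curve_S2 c \<and>
     (\<exists>\<epsilon>0>0. \<forall>\<epsilon>. 0 < \<epsilon> \<and> \<epsilon> < \<epsilon>0 \<longrightarrow> lift_homotopic \<gamma> c (model_satellite \<gamma> \<eta> p q \<epsilon>))"

end

theory Submission
  imports Defs
begin


definition winds :: "(real \<Rightarrow> complex) \<Rightarrow> int \<Rightarrow> bool" where
  "winds f k \<longleftrightarrow> (\<exists>g. continuous_on UNIV g \<and> (\<forall>t. f t = exp (g t)) \<and>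
      (\<forall>t. g (t + 2*pi) = g t + 2 * complex_of_real pi * \<i> * of_int k))"

lemma int_valued_const:
  fixes f :: "'a::topological_space \<Rightarrow> complex"
  assumes "connected S" "continuous_on S f" "\<And>x. x \<in> S \<Longrightarrow> f x \<in> \<int>"
  shows "f constant_on S"
proof (rule continuous_discrete_range_constant[OF assms(1,2)])
  fix x assume x: "x \<in> S"
  show "\<exists>e>0. \<forall>y. y \<in> S \<and> f y \<noteq> f x \<longrightarrow> e \<le> norm (f y - f x)"
  proof (intro exI[of _ 1] conjI allI impI)
    fix y assume y: "y \<in> S \<and> f y \<noteq> f x"
    obtain a where a: "f x = of_int a" using assms(3)[OF x] Ints_cases by metis
    obtain b where b: "f y = of_int b" using assms(3) y Ints_cases by metis
    have "a \<noteq> b" using a b y by auto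
    then have "1 \<le> \<bar>b - a\<bar>" by linarith
    also have "\<bar>b - a\<bar> = norm (of_int (b - a) :: complex)" by (simp only: norm_of_int)
    also have "\<dots> = norm (f y - f x)" using a b by simp
    finally show "1 \<le> norm (f y - f x)" by simp
  qed simp
qed

lemma exp_eq_Ints:
  assumes "exp a = exp b" shows "(a - b) / (2 * complex_of_real pi * \<i>) \<in> \<int>"
proof -
  obtain n::int where "a = b + complex_of_real (real_of_int (2*n) * pi) * \<i>" using assms exp_eq by blast
  then show ?thesis by (simp add: field_simps)
qed

lemma log_shift_const:
  fixes g :: "'a::topological_space \<Rightarrow> complex"
  assumes "connected S" "continuous_on S g" "continuous_on S g2"
    "\<And>x. x \<in> S \<Longrightarrow> exp (g2 x) = exp (g x)"
  shows "(\<lambda>x. (g2 x - g x) / (2 * complex_of_real pi * \<i>)) constant_on S"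
  apply (rule int_valued_const[OF assms(1)])
  using assms(2,3) apply (intro continuous_intros; simp)
  using exp_eq_Ints assms(4) by blast

lemma winds_unique_log:
  assumes "winds f k" "continuous_on UNIV g2" "\<And>t. f t = exp (g2 t)"
  shows "g2 (t + 2*pi) = g2 t + 2 * complex_of_real pi * \<i> * of_int k"
proof -
  obtain g where g: "continuous_on UNIV g" "\<And>t. f t = exp (g t)"
      "\<And>t. g (t + 2*pi) = g t + 2 * complex_of_real pi * \<i> * of_int k"
    using assms(1) unfolding winds_def by blast
  have "(\<lambda>x. (g2 x - g x) / (2 * complex_of_real pi * \<i>)) constant_on UNIV"
    by (rule log_shift_const) (use g assms in auto)
  then obtain c where c: "\<And>x. (g2 x - g x) / (2 * complex_of_real pi * \<i>) = c" unfolding constant_on_def by blast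
  have "g2 x = g x + 2 * complex_of_real pi * \<i>*c" for x using c[of x] by (simp add: field_simps)
  then show ?thesis using g(3)[of t] by simp
qed

lemma winds_unique: "winds f k \<Longrightarrow> winds f m \<Longrightarrow> k = m"
proof -
  assume a: "winds f k" "winds f m"
  obtain g where g: "continuous_on UNIV g" "\<And>t. f t = exp (g t)"
      "\<And>t. g (t + 2*pi) = g t + 2 * complex_of_real pi * \<i> * of_int m"
    using a(2) unfolding winds_def by blast
  have "g (0 + 2*pi) = g 0 + 2 * complex_of_real pi * \<i> * of_int k" by (rule winds_unique_log[OF a(1) g(1,2)])
  then have "2 * complex_of_real pi * \<i> * of_int k = 2 * complex_of_real pi * \<i>*(of_int m :: complex)" using g(3)[of 0] by simp
  then show "k = m" by simp
qed

lemma winds_mult: "winds f k \<Longrightarrow> winds h m \<Longrightarrow> winds (\<lambda>t. f t * h t) (k + m)"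
  unfolding winds_def
  apply (elim exE conjE)
  subgoal for g1 g2
    apply (rule exI[of _ "\<lambda>t. g1 t + g2 t"])
    apply (auto intro!: continuous_intros simp: exp_add algebra_simps)
    done
  done

lemma winds_cis: "winds (\<lambda>t. cis (of_int k * t)) k"
  unfolding winds_def
  by (rule exI[of _ "\<lambda>t. \<i> * of_real (of_int k * t)"])
     (auto intro!: continuous_intros simp: cis_conv_exp algebra_simps)

lemma winds_compare:
  assumes "winds f k" "continuous_on UNIV h" "\<And>t. h (t + 2*pi) = h t"
    "\<And>t. Re (f t * cnj (h t)) > 0"
  shows "winds h k"
proof -
  obtain g where g: "continuous_on UNIV g" "\<And>t. f t = exp (g t)"
      "\<And>t. g (t + 2*pi) = g t + 2 * complex_of_real pi * \<i> * of_int k"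
    using assms(1) unfolding winds_def by blast
  have fnz: "f t \<noteq> 0" for t using g(2) by simp
  have re: "Re (h t / f t) > 0" for t
  proof -
    have "h t / f t = cnj (f t * cnj (h t)) / (of_real (norm (f t))^2)"
      using fnz by (simp add: field_simps complex_norm_square flip: of_real_power)
    then show ?thesis using assms(4)[of t] fnz by (simp add: Re_divide_of_real)
  qed
  have e1: "exp (2 * complex_of_real pi * \<i> * of_int k) = 1"
    using exp_integer_2pi[of "of_int k"] by (simp add: mult_ac)
  have fper: "f (t + 2*pi) = f t" for t using g(2,3) e1
    by (simp add: exp_add)
  have contf: "continuous_on UNIV f"
    using g(1,2) by (metis (no_types, lifting) continuous_on_cong continuous_on_exp)
  define g2 where "g2 t = Ln (h t / f t)" for t
  have contg2: "continuous_on UNIV g2" unfolding g2_def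
    apply (rule continuous_on_compose2[of "{z. 0 < Re z}" Ln])
    using re fnz by (auto intro!: continuous_intros contf assms(2) continuous_on_Ln' simp: nonpos_Reals_def)
  show ?thesis unfolding winds_def
  proof (intro exI[of _ "\<lambda>t. g t + g2 t"] conjI allI)
    show "continuous_on UNIV (\<lambda>t. g t + g2 t)" using g(1) contg2 by (intro continuous_intros)
  next
    fix t
    have "h t / f t \<noteq> 0" using re[of t] by auto
    then show "h t = exp (g t + g2 t)" using fnz g(2)[of t]
      by (simp add: exp_add g2_def)
  next
    fix t show "g (t + 2 * pi) + g2 (t + 2 * pi) = g t + g2 t + 2 * complex_of_real pi * \<i> * of_int k"
      using g(3)[of t] by (simp add: g2_def fper assms(3))
  qed
qed

lemma winds_homotopy:
  fixes F :: "real \<times> real \<Rightarrow> complex"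
  assumes contF: "continuous_on ({0..1} \<times> UNIV) F"
    and nz: "\<And>s t. s \<in> {0..1} \<Longrightarrow> F (s,t) \<noteq> 0"
    and per: "\<And>s t. s \<in> {0..1} \<Longrightarrow> F (s, t + 2*pi) = F (s,t)"
    and w0: "winds (\<lambda>t. F (0,t)) k"
  shows "winds (\<lambda>t. F (1,t)) k"
proof -
  let ?S = "{0..1::real} \<times> (UNIV::real set)"
  have "contractible ?S" by (intro convex_imp_contractible convex_Times) auto
  then obtain G where G: "continuous_on ?S G" "\<And>x. x \<in> ?S \<Longrightarrow> F x = exp (G x)"
    using continuous_logarithm_on_contractible[OF contF] nz by (metis mem_Times_iff prod.collapse)
  have sh: "continuous_on ?S (\<lambda>x. G (fst x, snd x + 2*pi))"
    by (rule continuous_on_compose2[OF G(1)]) (auto intro!: continuous_intros)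
  have "(\<lambda>x. (G (fst x, snd x + 2*pi) - G x) / (2 * complex_of_real pi * \<i>)) constant_on ?S"
  proof (rule log_shift_const)
    show "connected ?S" by (intro convex_connected convex_Times) auto
    fix x assume "x \<in> ?S"
    then show "exp (G (fst x, snd x + 2 * pi)) = exp (G x)"
      using G(2)[of x] G(2)[of "(fst x, snd x + 2*pi)"] per[of "fst x" "snd x"] by auto
  qed (use G sh in auto)
  then obtain c where c: "\<And>x. x \<in> ?S \<Longrightarrow> (G (fst x, snd x + 2*pi) - G x) / (2 * complex_of_real pi * \<i>) = c"
    unfolding constant_on_def by blast
  have c': "G (s, t + 2*pi) = G (s,t) + 2 * complex_of_real pi * \<i> * c" if "s \<in> {0..1}" for s t
    using c[of "(s,t)"] that by (auto simp: field_simps)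
  have cs: "continuous_on UNIV (\<lambda>t. G (s,t))" if "s \<in> {0..1}" for s
    by (rule continuous_on_compose2[OF G(1)]) (use that in \<open>auto intro!: continuous_intros\<close>)
  have "G (0, 0 + 2*pi) = G (0, 0) + 2 * complex_of_real pi * \<i> * of_int k"
    by (rule winds_unique_log[OF w0 cs]) (use G(2) in auto)
  then have ck: "c = of_int k" using c'[of 0 0] by simp
  show ?thesis unfolding winds_def
    by (rule exI[of _ "\<lambda>t. G (1,t)"]) (use cs[of 1] G(2) c'[of 1] ck in auto)
qed


lemma winds_exists:
  assumes "continuous_on UNIV f" "\<And>t. f t \<noteq> 0" "\<And>t. f (t + 2*pi) = f t"
  shows "\<exists>k. winds f k"
proof -
  have cU: "contractible (UNIV::real set)" by (rule convex_imp_contractible[OF convex_UNIV])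
  obtain g where g: "continuous_on UNIV g" "\<And>x. f x = exp (g x)"
    by (rule continuous_logarithm_on_contractible[OF assms(1) cU]) (use assms(2) in auto)
  have sh: "continuous_on UNIV (\<lambda>x. g (x + 2*pi))"
    by (rule continuous_on_compose2[OF g(1)]) (auto intro!: continuous_intros)
  have ex: "exp (g (x + 2*pi)) = exp (g x)" for x using g(2)[of x] g(2)[of "x+2*pi"] assms(3)[of x] by simp
  have "(\<lambda>x. (g (x + 2*pi) - g x) / (2 * complex_of_real pi * \<i>)) constant_on UNIV"
    by (rule log_shift_const[OF connected_UNIV g(1) sh ex])
  then obtain c where c: "\<And>x. (g (x + 2*pi) - g x) / (2 * complex_of_real pi * \<i>) = c"
    unfolding constant_on_def by blast
  have "c \<in> \<int>" using c[of 0] exp_eq_Ints[OF ex[of 0]] by simp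
  then obtain k where k: "c = of_int k" by (metis Ints_cases)
  have "g (x + 2*pi) = g x + 2 * complex_of_real pi * \<i> * of_int k" for x
    using c[of x] k by (auto simp: field_simps)
  then show ?thesis unfolding winds_def using g by blast
qed


lemma vec3_nth [simp]: "vec3 a b c $ 1 = a" "vec3 a b c $ 2 = b" "vec3 a b c $ 3 = c"
  by (simp_all add: vec3_def)

lemma vec3_eq_iff: "x = y \<longleftrightarrow> x $ 1 = y $ 1 \<and> x $ 2 = y $ 2 \<and> (x::real^3) $ 3 = y $ 3"
  by (auto simp: vec_eq_iff forall_3)

lemma vec3_eta: "(x::real^3) = vec3 (x$1) (x$2) (x$3)"
  by (simp add: vec3_eq_iff)

lemma inner_vec3: "x \<bullet> y = (x::real^3)$1 * y$1 + x$2 * y$2 + x$3 * y$3"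
  by (simp add: inner_vec_def sum_3)

lemma norm_vec3: "norm (x::real^3) = sqrt ((x$1)^2 + (x$2)^2 + (x$3)^2)"
  by (simp add: norm_eq_sqrt_inner inner_vec3 power2_eq_square)

lemma vec3_plus [simp]: "vec3 a b c + vec3 d e f = vec3 (a+d) (b+e) (c+f)"
  by (simp add: vec3_eq_iff)

lemma vec3_scale [simp]: "r *\<^sub>R vec3 a b c = vec3 (r*a) (r*b) (r*c)"
  by (simp add: vec3_eq_iff)

lemma vec3_decomp: "vec3 a b c = a *\<^sub>R vec3 1 0 0 + b *\<^sub>R vec3 0 1 0 + c *\<^sub>R vec3 0 0 1"
  by (simp add: vec3_eq_iff)

lemma has_vector_derivative_vec3:
  assumes "(f has_real_derivative f') (at x within S)" "(g has_real_derivative g') (at x within S)"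
    "(h has_real_derivative h') (at x within S)"
  shows "((\<lambda>t. vec3 (f t) (g t) (h t)) has_vector_derivative vec3 f' g' h') (at x within S)"
proof -
  have 1: "((\<lambda>t. f t *\<^sub>R vec3 1 0 0) has_vector_derivative (f x *\<^sub>R 0 + f' *\<^sub>R vec3 1 0 0)) (at x within S)"
    by (rule has_vector_derivative_scaleR[OF assms(1) has_vector_derivative_const])
  have 2: "((\<lambda>t. g t *\<^sub>R vec3 0 1 0) has_vector_derivative (g x *\<^sub>R 0 + g' *\<^sub>R vec3 0 1 0)) (at x within S)"
    by (rule has_vector_derivative_scaleR[OF assms(2) has_vector_derivative_const])
  have 3: "((\<lambda>t. h t *\<^sub>R vec3 0 0 1) has_vector_derivative (h x *\<^sub>R 0 + h' *\<^sub>R vec3 0 0 1)) (at x within S)"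
    by (rule has_vector_derivative_scaleR[OF assms(3) has_vector_derivative_const])
  have "((\<lambda>t. f t *\<^sub>R vec3 1 0 0 + g t *\<^sub>R vec3 0 1 0 + h t *\<^sub>R vec3 0 0 1) has_vector_derivative
     ((f x *\<^sub>R 0 + f' *\<^sub>R vec3 1 0 0) + (g x *\<^sub>R 0 + g' *\<^sub>R vec3 0 1 0) + (h x *\<^sub>R 0 + h' *\<^sub>R vec3 0 0 1))) (at x within S)"
    by (intro has_vector_derivative_add 1 2 3)
  then show ?thesis by (simp only: vec3_decomp[symmetric] scaleR_zero_right add_0_left)
qed

definition Bf :: "(real^3) \<times> (real^3) \<Rightarrow> complex" where
  "Bf xu = Complex (fst xu $ 1 - snd xu $ 2) (fst xu $ 2 + snd xu $ 1)"
definition Cf :: "(real^3) \<times> (real^3) \<Rightarrow> complex" where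
  "Cf xu = Complex (snd xu $ 3) (fst xu $ 3)"

lemma euler_B:
  assumes "cos \<nu> = 1 - 2 * r2^2" "sin \<nu> = 2 * r1 * r2"
  shows "Bf (euler_inv (a1+a2) (a1-a2) \<nu>) = 2 * (of_real r2 * cis a2)^2"
    and "Cf (euler_inv (a1+a2) (a1-a2) \<nu>) = 2 * (of_real r1 * cis a1) * cnj (of_real r2 * cis a2)"
proof -
  have c2: "cos (2*a2) = cos (a1+a2) * cos (a1-a2) + sin (a1+a2) * sin (a1-a2)"
    by (metis cos_diff diff_add_eq_diff_diff_swap add_diff_cancel_left' mult_2 diff_diff_eq2 add_diff_cancel)
  have s2: "sin (2*a2) = sin (a1+a2) * cos (a1-a2) - cos (a1+a2) * sin (a1-a2)"
    by (metis sin_diff add_diff_cancel_left' mult_2 diff_diff_eq2 add_diff_cancel)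
  have cs2: "(cis a2)^2 = cis (2*a2)" by (simp add: power2_eq_square cis_mult)
  show "Bf (euler_inv (a1+a2) (a1-a2) \<nu>) = 2 * (of_real r2 * cis a2)^2"
    unfolding Bf_def euler_inv_def Let_def
    apply (simp add: complex_eq_iff power_mult_distrib cs2 assms cos_add sin_add cos_diff sin_diff sin_double cos_double)
    apply (intro conjI)
    subgoal using sin_cos_squared_add[of a1] sin_cos_squared_add[of a2] by algebra
    subgoal using sin_cos_squared_add[of a1] sin_cos_squared_add[of a2] by algebra
    done
  show "Cf (euler_inv (a1+a2) (a1-a2) \<nu>) = 2 * (of_real r1 * cis a1) * cnj (of_real r2 * cis a2)"
    unfolding Cf_def euler_inv_def Let_def
    apply (simp add: complex_eq_iff assms cos_diff sin_diff)
    apply (simp add: algebra_simps)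
    done
qed

lemma polar_Arg: "z = of_real (norm z) * cis (Arg z)"
proof (cases "z = 0")
  case False
  then show ?thesis by (simp add: cis_Arg sgn_div_norm scaleR_conv_of_real)
qed simp

lemma S3_norms: "z \<in> S3 \<Longrightarrow> norm (fst z)^2 + norm (snd z)^2 = 1"
  by (cases z) (simp add: S3_def norm_Pair)

lemma lmap_BC:
  assumes "z \<in> S3"
  shows "Bf (lmap z) = 2 * (snd z)^2" "Cf (lmap z) = 2 * fst z * cnj (snd z)"
proof -
  define r1 where "r1 = norm (fst z)"
  define r2 where "r2 = norm (snd z)"
  have n: "r1^2 + r2^2 = 1" using S3_norms[OF assms] by (simp add: r1_def r2_def)
  have r10: "0 \<le> r1" unfolding r1_def by simp
  have "r1^2 \<le> 1" using n zero_le_power2[of r2] by linarith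
  then have r1: "0 \<le> r1" "r1 \<le> 1" using r10 power2_le_imp_le[of r1 1] by auto
  have r2: "r2 = sqrt (1 - r1^2)" using n r2_def by (metis add_diff_cancel_left' norm_ge_zero real_sqrt_unique)
  have cosv: "cos (2 * arccos r1) = 1 - 2 * r2^2"
    using r1 n by (simp add: cos_double_cos cos_arccos)
  have sinv: "sin (2 * arccos r1) = 2 * r1 * r2"
    using r1 by (simp add: sin_double sin_arccos r2 cos_arccos)
  have l: "lmap z = euler_inv (Arg (fst z) + Arg (snd z)) (Arg (fst z) - Arg (snd z)) (2 * arccos r1)"
    by (simp add: lmap_def r1_def)
  have z1: "fst z = of_real r1 * cis (Arg (fst z))" by (simp add: r1_def flip: polar_Arg)
  have z2: "snd z = of_real r2 * cis (Arg (snd z))" by (simp add: r2_def flip: polar_Arg)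
  show "Bf (lmap z) = 2 * (snd z)^2"
    unfolding l by (subst z2, rule euler_B(1)[OF cosv sinv])
  show "Cf (lmap z) = 2 * fst z * cnj (snd z)"
    unfolding l by (subst z1, subst z2, rule euler_B(2)[OF cosv sinv])
qed

lemma deriv_periodic:
  assumes "\<And>t. c (t + 2*pi) = c t" "\<And>t. (c has_vector_derivative c' t) (at t)"
  shows "c' (t + 2*pi) = c' t"
proof -
  have d1: "((\<lambda>x. x + 2*pi) has_vector_derivative 1) (at t)"
    by (auto intro!: derivative_eq_intros simp: has_real_derivative_iff_has_vector_derivative[symmetric])
  have "((c \<circ> (\<lambda>x. x + 2*pi)) has_vector_derivative (1 *\<^sub>R c' (t + 2*pi))) (at t)"
    by (rule vector_diff_chain_at[OF d1 assms(2)])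
  moreover have "c \<circ> (\<lambda>x. x + 2*pi) = c" using assms(1) by (auto simp: o_def)
  ultimately have "(c has_vector_derivative c' (t + 2*pi)) (at t)" by simp
  then show ?thesis using vector_derivative_unique_at assms(2) by blast
qed

lemma regular_tl_periodic:
  assumes "regular_closed_curve_S2 c" shows "tangent_lift c (t + 2*pi) = tangent_lift c t"
proof -
  obtain c' where c': "\<And>t. (c has_vector_derivative c' t) (at t)"
    using assms unfolding regular_closed_curve_S2_def by blast
  have per: "\<And>t. c (t + 2*pi) = c t" using assms unfolding regular_closed_curve_S2_def by blast
  have vd: "vector_derivative c (at x) = c' x" for x using c' vector_derivative_at by blast
  show ?thesis unfolding tangent_lift_def vd using deriv_periodic[OF per c'] per by simp
qed

lemma equator_deriv: "(equator has_vector_derivative vec3 (- sin t) (cos t) 0) (at t)"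
  unfolding equator_def[abs_def]
  by (rule has_vector_derivative_vec3) (auto intro!: derivative_eq_intros)

lemma norm_vec3' [simp]: "norm (vec3 a b c) = sqrt (a^2 + b^2 + c^2)"
  by (simp add: norm_vec3)

lemma tl_equator: "tangent_lift equator t = (vec3 (cos t) (sin t) 0, vec3 (- sin t) (cos t) 0)"
  using vector_derivative_at[OF equator_deriv[of t]]
  by (simp add: tangent_lift_def equator_def)

lemma Bf_nz:
  assumes "xu \<in> T1S2 - range (tangent_lift equator)" shows "Bf xu \<noteq> 0"
proof
  assume B: "Bf xu = 0"
  obtain x u where xu: "xu = (x,u)" by fastforce
  have e1: "x$1 = u$2" and e2: "x$2 = - u$1" using B by (auto simp: Bf_def xu complex_eq_iff)
  have "norm x = 1" "x \<bullet> u = 0" "norm u = 1" using assms by (auto simp: T1S2_def S2_def xu)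
  then have n1: "(x$1)^2 + (x$2)^2 + (x$3)^2 = 1" and n2: "(u$1)^2 + (u$2)^2 + (u$3)^2 = 1"
      and i: "x$1 * u$1 + x$2 * u$2 + x$3 * u$3 = 0"
    by (auto simp: norm_vec3 inner_vec3)
  have "x$3 * u$3 = 0" using i e1 e2 by (simp add: algebra_simps)
  moreover have "(x$3)^2 = (u$3)^2" using n1 n2 e1 e2 by (simp add: algebra_simps power2_eq_square)
  ultimately have x3: "x$3 = 0" and u3: "u$3 = 0" by (auto simp: power2_eq_square)
  then have "(x$1)^2 + (x$2)^2 = 1" using n1 by simp
  then obtain t where t: "x$1 = cos t" "x$2 = sin t" using sincos_total_2pi by metis
  have "xu = tangent_lift equator t"
    using t x3 u3 e1 e2 by (auto simp: xu tl_equator vec3_eq_iff)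
  then show False using assms by auto
qed

lemma eta_const:
  assumes "unit_normal_field equator \<eta>"
  obtains \<sigma> where "\<sigma> = 1 \<or> \<sigma> = -1" "\<And>t. \<eta> t = vec3 0 0 \<sigma>"
proof -
  have pt: "\<eta> t $ 1 = 0 \<and> \<eta> t $ 2 = 0 \<and> (\<eta> t $ 3 = 1 \<or> \<eta> t $ 3 = -1)" for t
  proof -
    have a: "norm (\<eta> t) = 1" "\<eta> t \<bullet> equator t = 0" "\<eta> t \<bullet> vector_derivative equator (at t) = 0"
      using assms unfolding unit_normal_field_def by auto
    have "vector_derivative equator (at t) = vec3 (- sin t) (cos t) 0"
      using vector_derivative_at[OF equator_deriv[of t]] .
    then have e1: "\<eta> t $ 1 * cos t + \<eta> t $ 2 * sin t = 0" and e2: "- \<eta> t $ 1 * sin t + \<eta> t $ 2 * cos t = 0"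
      using a by (auto simp: inner_vec3 equator_def)
    have "\<eta> t $ 1 = cos t * (\<eta> t $ 1 * cos t + \<eta> t $ 2 * sin t) - sin t * (- \<eta> t $ 1 * sin t + \<eta> t $ 2 * cos t)"
      using sin_cos_squared_add[of t] by algebra
    then have h1: "\<eta> t $ 1 = 0" using e1 e2 by simp
    have "\<eta> t $ 2 = sin t * (\<eta> t $ 1 * cos t + \<eta> t $ 2 * sin t) + cos t * (- \<eta> t $ 1 * sin t + \<eta> t $ 2 * cos t)"
      using sin_cos_squared_add[of t] by algebra
    then have h2: "\<eta> t $ 2 = 0" using e1 e2 by simp
    have "\<bar>\<eta> t $ 3\<bar> = 1" using a(1) h1 h2 by (simp add: norm_vec3)
    then show ?thesis using h1 h2 by (cases "\<eta> t $ 3 \<ge> 0") auto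
  qed
  have cont: "continuous_on UNIV (\<lambda>t. complex_of_real (\<eta> t $ 3))"
    using assms unfolding unit_normal_field_def by (intro continuous_intros) auto
  have "(\<lambda>t. complex_of_real (\<eta> t $ 3)) constant_on UNIV"
    by (rule int_valued_const[OF connected_UNIV cont]) (metis pt Ints_1 Ints_minus of_real_1 of_real_minus)
  then obtain c where c: "\<And>t. complex_of_real (\<eta> t $ 3) = c" unfolding constant_on_def by blast
  have e3: "\<eta> t $ 3 = \<eta> 0 $ 3" for t using c[of t] c[of 0] of_real_eq_iff by metis
  show ?thesis
  proof (rule that[of "\<eta> 0 $ 3"])
    show "\<eta> 0 $ 3 = 1 \<or> \<eta> 0 $ 3 = -1" using pt by blast
    fix t show "\<eta> t = vec3 0 0 (\<eta> 0 $ 3)" unfolding vec3_eq_iff vec3_nth using pt[of t] e3[of t] by simp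
  qed
qed



lemma sin_nat_per: "sin (real n * (t + 2*pi)) = sin (real n * t)"
proof -
  have "real n * (t + 2*pi) = real n * t + 2 * real n * pi" by (simp add: algebra_simps)
  then show ?thesis by (simp add: sin_add)
qed

lemma cos_nat_per: "cos (real n * (t + 2*pi)) = cos (real n * t)"
proof -
  have "real n * (t + 2*pi) = real n * t + 2 * real n * pi" by (simp add: algebra_simps)
  then show ?thesis by (simp add: cos_add)
qed

lemma sin_mul_pos:
  fixes y e :: real
  assumes "y \<noteq> 0" "\<bar>y\<bar> \<le> 1" "0 < e" "e \<le> 1"
  shows "y * sin (e * y) > 0"
proof (cases "y > 0")
  case True
  have "e * y \<le> 1" using assms True by (simp add: mult_le_one)
  then have "sin (e * y) > 0" using True assms pi_gt3 by (intro sin_gt_zero) auto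
  then show ?thesis using True by simp
next
  case False
  then have y: "y < 0" using assms by simp
  have "e * (-y) \<le> 1" by (rule mult_le_one) (use assms y in auto)
  moreover have "0 < e * (-y)" using y assms by (simp add: mult_pos_neg)
  ultimately have "sin (e * (-y)) > 0" using pi_gt3 by (intro sin_gt_zero) auto
  then show ?thesis using y by (simp add: mult_neg_neg)
qed

lemma model_winds:
  fixes p q :: nat and \<epsilon> \<sigma> :: real
  assumes p: "p \<ge> 1" and e: "0 < \<epsilon>" "\<epsilon> \<le> 1" and \<sigma>: "\<sigma> = 1 \<or> \<sigma> = -1"
    and \<eta>: "\<And>t. \<eta> t = vec3 0 0 \<sigma>"
  shows "if q = 0 then Bf (tangent_lift (model_satellite equator \<eta> p q \<epsilon>) 0) = 0
         else winds (\<lambda>t. Bf (tangent_lift (model_satellite equator \<eta> p q \<epsilon>) t)) (int p - 2 * int q)"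
proof -
  define h where "h t = \<epsilon> * sin (real q * t)" for t :: real
  define h' where "h' t = \<epsilon> * q * cos (real q * t)" for t :: real
  define N where "N t = sqrt ((h' t)^2 + (real p)^2 * (cos (h t))^2)" for t
  have \<sigma>2: "\<sigma>^2 = 1" using \<sigma> by auto
  have habs: "\<bar>h t\<bar> \<le> 1" for t
    unfolding h_def using e by (simp add: abs_mult mult_le_one)
  have cosh: "cos (h t) > 0" for t
    using habs[of t] pi_gt3 by (intro cos_gt_zero_pi) auto
  have Npos: "N t > 0" for t unfolding N_def using cosh[of t] p
    by (intro real_sqrt_gt_zero add_nonneg_pos) auto
  have model: "model_satellite equator \<eta> p q \<epsilon> =
      (\<lambda>t. vec3 (cos (h t) * cos (real p * t)) (cos (h t) * sin (real p * t)) (\<sigma> * sin (h t)))"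
  proof
    fix t
    show "model_satellite equator \<eta> p q \<epsilon> t =
       vec3 (cos (h t) * cos (real p * t)) (cos (h t) * sin (real p * t)) (\<sigma> * sin (h t))"
    proof (cases "h t = 0")
      case True
      then show ?thesis using \<sigma>
        by (auto simp: model_satellite_def sphere_exp_def \<eta> equator_def h_def vec3_eq_iff)
    next
      case False
      have nv: "norm ((\<epsilon> * sin (real q * t)) *\<^sub>R \<eta> (real p * t)) = \<bar>h t\<bar>"
        using \<sigma>2 by (simp add: \<eta> h_def power_mult_distrib real_sqrt_mult abs_mult)
      have "sin \<bar>h t\<bar> / \<bar>h t\<bar> = sin (h t) / h t"
        by (cases "h t \<ge> 0") auto
      then show ?thesis using False nv
        by (auto simp: model_satellite_def sphere_exp_def \<eta> equator_def vec3_eq_iff h_def[symmetric])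
    qed
  qed
  define x' where "x' t = vec3 (- sin (h t) * h' t * cos (real p * t) - real p * cos (h t) * sin (real p * t))
      (- sin (h t) * h' t * sin (real p * t) + real p * cos (h t) * cos (real p * t)) (\<sigma> * cos (h t) * h' t)" for t
  have hd: "(h has_real_derivative h' t) (at t)" for t
    unfolding h_def[abs_def] h'_def by (auto intro!: derivative_eq_intros)
  have md: "((\<lambda>t. vec3 (cos (h t) * cos (real p * t)) (cos (h t) * sin (real p * t)) (\<sigma> * sin (h t)))
      has_vector_derivative x' t) (at t)" for t
    unfolding x'_def
    by (rule has_vector_derivative_vec3) (auto intro!: derivative_eq_intros hd)
  have nx': "norm (x' t) = N t" for t
  proof -
    have "(- sin (h t) * h' t * cos (real p * t) - real p * cos (h t) * sin (real p * t))^2 +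
      (- sin (h t) * h' t * sin (real p * t) + real p * cos (h t) * cos (real p * t))^2 + (\<sigma> * cos (h t) * h' t)^2
      = (h' t)^2 + (real p)^2 * (cos (h t))^2"
      using sin_cos_squared_add[of "h t"] sin_cos_squared_add[of "p*t"] \<sigma>2 by algebra
    then show ?thesis by (simp add: x'_def N_def)
  qed
  define F where "F t = Complex (cos (h t) * (N t - real p)) (- h' t * sin (h t))" for t
  have BF: "Bf (tangent_lift (model_satellite equator \<eta> p q \<epsilon>) t) = cis (real p * t) * F t / of_real (N t)" for t
  proof -
    have vd: "vector_derivative (model_satellite equator \<eta> p q \<epsilon>) (at t) = x' t"
      unfolding model using vector_derivative_at[OF md] .
    have Nt: "N t \<noteq> 0" using Npos[of t] by simp
    show ?thesis
      unfolding tangent_lift_def vd nx' Bf_def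
      using Nt by (simp add: model x'_def F_def complex_eq_iff field_simps Re_divide_of_real Im_divide_of_real)
  qed
  show ?thesis
  proof (cases "q = 0")
    case True
    have "N 0 = real p" by (simp add: N_def h_def h'_def True)
    then have "F 0 = 0" by (simp add: F_def h_def h'_def True complex_eq_iff)
    then show ?thesis using BF[of 0] True by simp
  next
    case False
    then have q: "q \<ge> 1" by simp
  have hper: "h (t + 2*pi) = h t" for t unfolding h_def by (simp add: sin_nat_per)
  have h'per: "h' (t + 2*pi) = h' t" for t unfolding h'_def by (simp add: cos_nat_per)
  have Nper: "N (t + 2*pi) = N t" for t unfolding N_def by (simp add: hper h'per)
  have cisper: "cis (real p * (t + 2*pi)) = cis (real p * t)" for t
    by (simp add: cis.ctr sin_nat_per cos_nat_per)
  have conth: "continuous_on UNIV h" unfolding h_def[abs_def] by (intro continuous_intros)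
  have conth': "continuous_on UNIV h'" unfolding h'_def[abs_def] by (intro continuous_intros)
  have contN: "continuous_on UNIV N" unfolding N_def[abs_def]
    by (intro continuous_intros conth conth')
  have N2: "(N t)^2 = (h' t)^2 + (real p)^2 * (cos (h t))^2" for t
    unfolding N_def by (simp add: add_nonneg_nonneg)
  have sq: "(sin (real q * t))^2 + (cos (real q * t))^2 = 1" for t by simp
  have smp: "sin (real q * t) \<noteq> 0 \<Longrightarrow> sin (real q * t) * sin (h t) > 0" for t
    unfolding h_def using e by (intro sin_mul_pos) auto
  define K where "K t = complex_of_real (q * cos (real q * t)) + \<i> * complex_of_real (- p * sin (real q * t))" for t
  have w1: "winds (\<lambda>t. cis (of_int (- int q) * t)) (- int q)" by (rule winds_cis)
  have w2: "winds K (- int q)"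
  proof (rule winds_compare[OF w1])
    show "continuous_on UNIV K" unfolding K_def[abs_def] by (intro continuous_intros)
    show "K (t + 2*pi) = K t" for t unfolding K_def by (simp add: sin_nat_per cos_nat_per)
    fix t
    have "Re (cis (of_int (- int q) * t) * cnj (K t)) = q * (cos (real q * t))^2 + p * (sin (real q * t))^2"
      by (simp add: K_def power2_eq_square)
    also have "\<dots> \<ge> (cos (real q * t))^2 + (sin (real q * t))^2"
      using p q mult_right_mono[of 1 "real q" "(cos (real q * t))^2"] mult_right_mono[of 1 "real p" "(sin (real q * t))^2"]
      by (intro add_mono) auto
    finally show "Re (cis (of_int (- int q) * t) * cnj (K t)) > 0" using sq[of t] by simp
  qed
  define H where "H t = complex_of_real (h' t) + \<i> * complex_of_real (- p * sin (h t))" for t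
  have contH: "continuous_on UNIV H" unfolding H_def[abs_def] by (intro continuous_intros conth conth')
  have Hper: "H (t + 2*pi) = H t" for t unfolding H_def by (simp add: hper h'per)
  have w3: "winds H (- int q)"
  proof (rule winds_compare[OF w2 contH Hper])
    fix t
    have re: "Re (K t * cnj (H t)) = \<epsilon> * (real q)^2 * (cos (real q * t))^2 + (real p)^2 * (sin (real q * t) * sin (h t))"
      by (simp add: K_def H_def h'_def power2_eq_square algebra_simps)
    show "Re (K t * cnj (H t)) > 0"
    proof (cases "sin (real q * t) = 0")
      case True
      then have "(cos (real q * t))^2 = 1" using sq[of t] by simp
      then show ?thesis unfolding re using True e q by simp
    next
      case False
      have "0 < (real p)^2 * (sin (real q * t) * sin (h t))" using smp[OF False] p by simp
      moreover have "0 \<le> \<epsilon> * (real q)^2 * (cos (real q * t))^2" using e by simp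
      ultimately show ?thesis unfolding re by linarith
    qed
  qed
  have w4: "winds (\<lambda>t. H t * H t) (- int q + - int q)" by (rule winds_mult[OF w3 w3])
  have contF: "continuous_on UNIV F" unfolding F_def Complex_eq[abs_def]
    by (intro continuous_intros conth conth' contN)
  have Fper: "F (t + 2*pi) = F t" for t unfolding F_def by (simp add: hper h'per Nper)
  have w5: "winds F (- int q + - int q)"
  proof (rule winds_compare[OF w4 contF Fper])
    fix t
    have A: "(h' t)^2 - (real p)^2 * (sin (h t))^2 = (N t - real p) * (N t + real p)"
      using N2[of t] sin_cos_squared_add[of "h t"] by algebra
    have re: "Re (H t * H t * cnj (F t)) = cos (h t) * (N t - real p)^2 * (N t + real p) + 2 * real p * (h' t * sin (h t))^2"
    proof -
      have "Re (H t * H t * cnj (F t)) = ((h' t)^2 - (real p)^2 * (sin (h t))^2) * (cos (h t) * (N t - real p)) + 2 * real p * (h' t * sin (h t))^2"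
        by (simp add: H_def F_def power2_eq_square algebra_simps)
      then show ?thesis unfolding A by (simp add: power2_eq_square algebra_simps)
    qed
    have t1: "0 \<le> cos (h t) * (N t - real p)^2 * (N t + real p)" using cosh[of t] Npos[of t] by simp
    show "Re (H t * H t * cnj (F t)) > 0"
    proof (cases "h' t * sin (h t) = 0")
      case False
      then show ?thesis unfolding re using t1 p by (simp add: add_nonneg_pos)
    next
      case True
      have "N t \<noteq> real p"
      proof
        assume Np: "N t = real p"
        then have "(h' t)^2 = (real p)^2 * (sin (h t))^2" using A by simp
        with True have hz: "h' t = 0" "sin (h t) = 0" using p by (auto simp: power2_eq_square)
        then have "sin (real q * t) = 0" using smp by fastforce
        moreover have "cos (real q * t) = 0" using hz e q by (simp add: h'_def)
        ultimately show False using sq[of t] by simp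
      qed
      then have "0 < cos (h t) * (N t - real p)^2 * (N t + real p)" using cosh[of t] Npos[of t] by simp
      then show ?thesis unfolding re by (simp add: add_pos_nonneg)
    qed
  qed
  have w6: "winds (\<lambda>t. cis (of_int (int p) * t) * F t) (int p + (- int q + - int q))"
    by (rule winds_mult[OF winds_cis w5])
  define P where "P t = cis (real p * t) * F t" for t
  have w6': "winds P (int p - 2 * int q)" using w6 unfolding P_def by (simp add: algebra_simps)
  have Pnz: "P t \<noteq> 0" for t using w6' unfolding winds_def by auto
  have B: "(\<lambda>t. Bf (tangent_lift (model_satellite equator \<eta> p q \<epsilon>) t)) = (\<lambda>t. P t / of_real (N t))"
    using BF unfolding P_def by auto
  have "winds (\<lambda>t. Bf (tangent_lift (model_satellite equator \<eta> p q \<epsilon>) t)) (int p - 2 * int q)"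
    unfolding B
  proof (rule winds_compare[OF w6'])
    show "continuous_on UNIV (\<lambda>t. P t / complex_of_real (N t))"
    proof -
      have "complex_of_real (N t) \<noteq> 0" for t using Npos[of t] by simp
      then show ?thesis unfolding P_def[abs_def] by (intro continuous_intros contF contN) auto
    qed
    show "P (t + 2 * pi) / complex_of_real (N (t + 2 * pi)) = P t / complex_of_real (N t)" for t
      by (simp add: P_def cisper Fper Nper)
    fix t
    have "P t * cnj (P t / complex_of_real (N t)) = complex_of_real ((norm (P t))^2) / complex_of_real (N t)"
      by (simp add: complex_norm_square[symmetric] del: of_real_power)
    then have "Re (P t * cnj (P t / complex_of_real (N t))) = (norm (P t))^2 / N t"
      by (simp only: of_real_divide[symmetric] Re_complex_of_real)
    then show "Re (P t * cnj (P t / complex_of_real (N t))) > 0" using Pnz[of t] Npos[of t] by simp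
  qed
  then show ?thesis using False by simp
qed
qed



lemma norm_prod_complex: "norm (z :: complex \<times> complex) = sqrt ((norm (fst z))^2 + (norm (snd z))^2)"
  by (cases z) (simp add: norm_Pair)

lemma in_Xset: "z \<in> S3 \<Longrightarrow> snd z \<noteq> 0 \<Longrightarrow> z \<in> S3 - {(w, 0) | w. norm w = 1}"
  by auto

lemma cis_2pi_int: "cis (x + 2 * pi * of_int k) = cis x"
proof -
  have "cis (2 * pi * of_int k) = 1" by (simp add: cis.ctr complex_eq_iff)
  then show ?thesis by (simp add: cis_mult[symmetric] )
qed

lemma loop_to_circle:
  fixes \<gamma> :: "real \<Rightarrow> complex \<times> complex"
  assumes pg: "path \<gamma>" and lg: "pathfinish \<gamma> = pathstart \<gamma>"
    and ing: "\<And>s. s \<in> {0..1} \<Longrightarrow> \<gamma> s \<in> S3 \<and> snd (\<gamma> s) \<noteq> 0"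
  shows "homotopic_loops (S3 - {(z, 0) | z. norm z = 1}) \<gamma>
           (\<lambda>s. (0, snd (\<gamma> s) / of_real (norm (snd (\<gamma> s)))))"
proof -
  let ?X = "S3 - {(z, 0) | z. norm z = 1}"
  let ?Y = "{z :: complex \<times> complex. snd z \<noteq> 0}"
  define \<delta> where "\<delta> s = ((0::complex), snd (\<gamma> s) / of_real (norm (snd (\<gamma> s))))" for s
  define nm where "nm z = (1 / norm z) *\<^sub>R z" for z :: "complex \<times> complex"
  have cg: "continuous_on {0..1} \<gamma>" using pg by (simp add: path_def)
  have nz: "complex_of_real (norm (snd (\<gamma> s))) \<noteq> 0" if "s \<in> {0..1}" for s using ing[OF that] by simp
  have pd: "path \<delta>" unfolding path_def \<delta>_def
    using nz by (intro continuous_intros cg) auto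
  have ld: "pathfinish \<delta> = pathstart \<delta>" using lg by (simp add: pathfinish_def pathstart_def \<delta>_def)
  have "homotopic_loops ?Y \<gamma> \<delta>"
  proof (rule homotopic_loops_linear[OF pg pd lg ld])
    fix t :: real assume t: "t \<in> {0..1}"
    show "closed_segment (\<gamma> t) (\<delta> t) \<subseteq> ?Y"
    proof
      fix w assume "w \<in> closed_segment (\<gamma> t) (\<delta> t)"
      then obtain u where u: "0 \<le> u" "u \<le> 1" "w = (1 - u) *\<^sub>R \<gamma> t + u *\<^sub>R \<delta> t"
        unfolding closed_segment_def by auto
      define r where "r = norm (snd (\<gamma> t))"
      have r: "r > 0" using ing[OF t] by (simp add: r_def)
      have "snd w = complex_of_real ((1 - u) + u / r) * snd (\<gamma> t)"
        using r by (simp add: u \<delta>_def r_def[symmetric] scaleR_conv_of_real field_simps)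
      moreover have "(1 - u) + u / r > 0"
      proof (cases "u = 1")
        case True then show ?thesis using r by simp
      next
        case False then show ?thesis using u r by (simp add: add_pos_nonneg)
      qed
      ultimately show "w \<in> ?Y" using ing[OF t] by (simp del: of_real_add of_real_diff of_real_divide)
    qed
  qed
  then have "homotopic_loops ?X (nm \<circ> \<gamma>) (nm \<circ> \<delta>)"
  proof (rule homotopic_loops_continuous_image)
    show "continuous_on ?Y nm" unfolding nm_def[abs_def]
      by (intro continuous_intros) (auto simp: zero_prod_def)
    show "nm \<in> ?Y \<rightarrow> ?X"
    proof
      fix z :: "complex \<times> complex" assume z: "z \<in> ?Y"
      then have "z \<noteq> 0" by (auto simp: zero_prod_def)
      then have "norm (nm z) = 1" by (simp add: nm_def)
      moreover have "snd (nm z) \<noteq> 0" using z \<open>z \<noteq> 0\<close> by (simp add: nm_def)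
      ultimately show "nm z \<in> ?X" by (intro in_Xset) (auto simp: S3_def)
    qed
  qed
  moreover have "homotopic_loops ?X \<gamma> (nm \<circ> \<gamma>)"
  proof (rule homotopic_loops_eq[OF pg _ lg])
    show "path_image \<gamma> \<subseteq> ?X" unfolding path_image_def using ing by (auto intro!: in_Xset)
    fix t :: real assume "t \<in> {0..1}"
    then have "norm (\<gamma> t) = 1" using ing by (simp add: S3_def)
    then show "\<gamma> t = (nm \<circ> \<gamma>) t" by (simp add: nm_def)
  qed
  moreover have "homotopic_loops ?X \<delta> (nm \<circ> \<delta>)"
  proof (rule homotopic_loops_eq[OF pd _ ld])
    have "norm (\<delta> t) = 1" if "t \<in> {0..1}" for t
      using nz[OF that] by (simp add: \<delta>_def norm_prod_complex norm_divide)
    moreover have "snd (\<delta> t) \<noteq> 0" if "t \<in> {0..1}" for t using nz[OF that] ing[OF that] by (simp add: \<delta>_def)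
    ultimately show "path_image \<delta> \<subseteq> ?X" unfolding path_image_def
      by (auto simp: S3_def) (metis snd_conv)
    fix t :: real assume "t \<in> {0..1}"
    then have "norm (\<delta> t) = 1" using nz by (simp add: \<delta>_def norm_prod_complex norm_divide)
    then show "\<delta> t = (nm \<circ> \<delta>) t" by (simp add: nm_def)
  qed
  ultimately have "homotopic_loops ?X \<gamma> \<delta>"
    by (meson homotopic_loops_sym homotopic_loops_trans)
  then show ?thesis unfolding \<delta>_def .
qed

lemma circle_loops:
  fixes a b :: "real \<Rightarrow> real" and k :: int
  assumes ca: "continuous_on {0..1} a" and cb: "continuous_on {0..1} b"
    and ka: "a 1 = a 0 + 2 * pi * of_int k" and kb: "b 1 = b 0 + 2 * pi * of_int k"
  shows "homotopic_loops (S3 - {(z, 0) | z. norm z = 1}) (\<lambda>s. (0, cis (a s))) (\<lambda>s. (0, cis (b s)))"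
  unfolding homotopic_loops
proof (intro exI[of _ "\<lambda>x. ((0::complex), cis ((1 - fst x) * a (snd x) + fst x * b (snd x)))"] conjI ballI)
  have ca': "continuous_on ({0..1} \<times> {0..1}) (\<lambda>x. a (snd x))"
    by (rule continuous_on_compose2[OF ca]) (auto intro: continuous_intros)
  have cb': "continuous_on ({0..1} \<times> {0..1}) (\<lambda>x. b (snd x))"
    by (rule continuous_on_compose2[OF cb]) (auto intro: continuous_intros)
  show "continuous_on ({0..1} \<times> {0..1}) (\<lambda>x. ((0::complex), cis ((1 - fst x) * a (snd x) + fst x * b (snd x))))"
    by (intro continuous_intros ca' cb')
  show "(\<lambda>x. ((0::complex), cis ((1 - fst x) * a (snd x) + fst x * b (snd x)))) \<in> {0..1} \<times> {0..1} \<rightarrow> S3 - {(z, 0) |z. norm z = 1}"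
    by (auto simp: S3_def norm_Pair)
  fix t :: real assume "t \<in> {0..1}"
  have "(1 - t) * a 1 + t * b 1 = ((1 - t) * a 0 + t * b 0) + 2 * pi * of_int k"
    using ka kb by (simp add: algebra_simps)
  then show "pathfinish ((\<lambda>x. ((0::complex), cis ((1 - fst x) * a (snd x) + fst x * b (snd x)))) \<circ> Pair t) =
         pathstart ((\<lambda>x. ((0::complex), cis ((1 - fst x) * a (snd x) + fst x * b (snd x)))) \<circ> Pair t)"
    by (simp add: pathfinish_def pathstart_def cis_2pi_int)
qed auto



lemma cont_Bf: "continuous_on UNIV Bf"
  unfolding Bf_def[abs_def] Complex_eq by (intro continuous_intros)

theorem mainTheorem1:
  fixes p q :: nat and \<eta> \<gamma>pq :: "real \<Rightarrow> real^3"
    and \<Gamma> :: "real \<Rightarrow> complex \<times> complex" and c1 c2 :: real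
  assumes "p \<ge> 1" and "coprime p q"
    and "unit_normal_field equator \<eta>"
    and "is_satellite equator \<eta> p q \<gamma>pq"
    and "continuous_on UNIV \<Gamma>" and "\<forall>t. \<Gamma> t \<in> S3"
    and "\<forall>t. lmap (\<Gamma> t) = tangent_lift \<gamma>pq t"
    and "c1 > 0" and "c2 > 0" and "c1^2 + c2^2 = 1"
  shows "let T = (if even p then 2*pi else 4*pi) in
     homotopic_loops (S3 - {(z, 0) | z. norm z = 1})
       (\<lambda>s. \<Gamma> (T * s))
       (\<lambda>s. (complex_of_real c1 * cis (real p * (T * s) / 2),
             complex_of_real c2 * cis ((real p - 2 * real q) * (T * s) / 2)))"
proof -
  note p = assms(1)
  have reg: "regular_closed_curve_S2 \<gamma>pq" and
    "\<exists>\<epsilon>0>0. \<forall>\<epsilon>. 0 < \<epsilon> \<and> \<epsilon> < \<epsilon>0 \<longrightarrow> lift_homotopic equator \<gamma>pq (model_satellite equator \<eta> p q \<epsilon>)"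
    using assms(4) unfolding is_satellite_def by auto
  then obtain \<epsilon>0 where e0: "\<epsilon>0 > 0"
    and ls: "\<And>\<epsilon>. 0 < \<epsilon> \<Longrightarrow> \<epsilon> < \<epsilon>0 \<Longrightarrow> lift_homotopic equator \<gamma>pq (model_satellite equator \<eta> p q \<epsilon>)"
    by blast
  define \<epsilon> where "\<epsilon> = min (\<epsilon>0/2) 1"
  have e: "0 < \<epsilon>" "\<epsilon> \<le> 1" "\<epsilon> < \<epsilon>0" using e0 by (auto simp: \<epsilon>_def)
  obtain c :: "real \<Rightarrow> real \<Rightarrow> real^3" where c0: "c 0 = \<gamma>pq" and c1: "c 1 = model_satellite equator \<eta> p q \<epsilon>"
    and creg: "\<And>s. s \<in> {0..1} \<Longrightarrow> regular_closed_curve_S2 (c s)"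
    and ccont: "continuous_on ({0..1} \<times> UNIV) (\<lambda>(s, t). tangent_lift (c s) t)"
    and cin: "\<And>s t. s \<in> {0..1} \<Longrightarrow> tangent_lift (c s) t \<in> T1S2 - range (tangent_lift equator)"
    using ls[OF e(1) e(3)] unfolding lift_homotopic_def by blast
  obtain \<sigma> where \<sigma>: "\<sigma> = 1 \<or> \<sigma> = -1" and \<eta>: "\<And>t. \<eta> t = vec3 0 0 \<sigma>"
    using eta_const[OF assms(3)] by blast
  define F where "F x = Bf ((\<lambda>(s, t). tangent_lift (c s) t) x)" for x
  have contF: "continuous_on ({0..1} \<times> UNIV) F"
    unfolding F_def by (rule continuous_on_compose2[OF cont_Bf ccont]) auto
  have Fnz: "F (s,t) \<noteq> 0" if "s \<in> {0..1}" for s t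
    unfolding F_def using Bf_nz[OF cin[OF that]] by simp
  have Fper: "F (s, t + 2*pi) = F (s,t)" if "s \<in> {0..1}" for s t
    unfolding F_def using regular_tl_periodic[OF creg[OF that]] by simp
  have mw: "if q = 0 then Bf (tangent_lift (model_satellite equator \<eta> p q \<epsilon>) 0) = 0
         else winds (\<lambda>t. Bf (tangent_lift (model_satellite equator \<eta> p q \<epsilon>) t)) (int p - 2 * int q)"
    by (rule model_winds[OF p e(1,2) \<sigma> \<eta>])
  have "F (1, 0) \<noteq> 0" using Fnz by simp
  then have q: "q \<noteq> 0" using mw by (auto simp: F_def c1 split: if_splits)
  then have w1: "winds (\<lambda>t. F (1,t)) (int p - 2 * int q)" using mw by (simp add: F_def c1)
  have cF0: "continuous_on UNIV (\<lambda>t. F (0,t))"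
    by (rule continuous_on_compose2[OF contF]) (auto intro!: continuous_intros)
  obtain k where "winds (\<lambda>t. F (0,t)) k" using winds_exists[OF cF0] Fnz Fper by force
  then have "winds (\<lambda>t. F (1,t)) k" using winds_homotopy[OF contF] Fnz Fper by blast
  then have "k = int p - 2 * int q" using w1 winds_unique by blast
  with \<open>winds (\<lambda>t. F (0,t)) k\<close> have w0: "winds (\<lambda>t. Bf (tangent_lift \<gamma>pq t)) (int p - 2 * int q)"
    by (simp add: F_def c0)
  have BG: "Bf (tangent_lift \<gamma>pq t) = 2 * (snd (\<Gamma> t))^2" for t
    using lmap_BC(1)[of "\<Gamma> t"] assms(6,7) by simp
  have CG: "Cf (tangent_lift \<gamma>pq t) = 2 * fst (\<Gamma> t) * cnj (snd (\<Gamma> t))" for t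
    using lmap_BC(2)[of "\<Gamma> t"] assms(6,7) by simp
  have snz: "snd (\<Gamma> t) \<noteq> 0" for t
    using Fnz[of 0 t] BG[of t] by (auto simp: F_def c0)
  have cs: "continuous_on UNIV (\<lambda>t. snd (\<Gamma> t))" using assms(5) by (intro continuous_intros)
  have cU: "contractible (UNIV::real set)" by (rule convex_imp_contractible[OF convex_UNIV])
  obtain g where g: "continuous_on UNIV g" "\<And>t. snd (\<Gamma> t) = exp (g t)"
    by (rule continuous_logarithm_on_contractible[OF cs cU]) (use snz in auto)
  have "(\<lambda>t. of_real (ln 2) + 2 * g t) (t + 2*pi) = (\<lambda>t. of_real (ln 2) + 2 * g t) t + 2 * complex_of_real pi * \<i> * of_int (int p - 2 * int q)" for t
  proof (rule winds_unique_log[OF w0])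
    show "continuous_on UNIV (\<lambda>t. of_real (ln 2) + 2 * g t)" using g(1) by (intro continuous_intros)
    fix t
    have "exp (complex_of_real (ln 2) + 2 * g t) = 2 * (exp (g t))^2"
    proof -
      have e2: "exp (ln (2::real)) = 2" by simp
      have "exp (complex_of_real (ln 2)) = 2" by (simp only: exp_of_real e2 of_real_numeral)
      moreover have "exp (2 * g t) = exp (g t) * exp (g t)" by (simp only: mult_2 exp_add)
      ultimately show ?thesis by (simp only: exp_add power2_eq_square)
    qed
    then show "Bf (tangent_lift \<gamma>pq t) = exp (complex_of_real (ln 2) + 2 * g t)" using BG g(2) by simp
  qed
  note X = this
  have gper: "g (t + 2*pi) = g t + complex_of_real pi * \<i> * of_int (int p - 2 * int q)" for t
  proof -
    have "2 * g (t + 2*pi) = 2 * (g t + complex_of_real pi * \<i> * of_int (int p - 2 * int q))"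
      using X[of t] by (simp add: algebra_simps)
    then show ?thesis by (simp only: mult_cancel_left) simp
  qed
  define T where "T = (if even p then 2*pi else 4*pi)"
  define m :: int where "m = (if even p then (int p - 2 * int q) div 2 else int p - 2 * int q)"
  have pm: "real p - 2 * real q = (if even p then 2 * m else m)"
  proof (cases "even p")
    case True
    then have "even (int p - 2 * int q)" by simp
    then have "int p - 2 * int q = 2 * m" using True by (simp add: m_def)
    then have "real_of_int (int p - 2 * int q) = real_of_int (2 * m)" by (simp only:)
    then show ?thesis using True by simp
  next
    case False
    then show ?thesis by (simp add: m_def)
  qed
  have gT: "g T = g 0 + 2 * complex_of_real pi * \<i> * of_int m"
  proof (cases "even p")
    case True
    then have "int p - 2 * int q = 2 * m" by (simp add: m_def)
    then show ?thesis using gper[of 0] True unfolding T_def by simp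
  next
    case False
    let ?d = "complex_of_real pi * \<i> * of_int (int p - 2 * int q)"
    have "g (0 + 2*pi + 2*pi) = g (0 + 2*pi) + ?d" by (rule gper)
    also have "g (0 + 2*pi) = g 0 + ?d" by (rule gper)
    finally have "g (0 + 2*pi + 2*pi) = g 0 + 2 * complex_of_real pi * \<i> * of_int (int p - 2 * int q)"
      by (simp only: add.assoc mult_2 distrib_right mult.assoc)
    then show ?thesis using False unfolding T_def m_def by simp
  qed
  have TL: "tangent_lift \<gamma>pq T = tangent_lift \<gamma>pq 0"
    using regular_tl_periodic[OF reg, of 0] regular_tl_periodic[OF reg, of "0 + 2*pi"]
    unfolding T_def by auto
  have sT: "snd (\<Gamma> T) = snd (\<Gamma> 0)"
  proof -
    have e1: "exp (2 * complex_of_real pi * \<i> * of_int m) = 1"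
      using exp_integer_2pi[of "of_int m"] by (simp add: mult_ac)
    show ?thesis using g(2)[of T] g(2)[of 0] gT e1 by (simp add: exp_add)
  qed
  have "fst (\<Gamma> T) = fst (\<Gamma> 0)"
    using CG[of T] CG[of 0] TL sT snz[of 0] by simp
  then have loopG: "\<Gamma> T = \<Gamma> 0" using sT by (simp add: prod_eq_iff)
  let ?X = "S3 - {(z, 0) | z. norm z = 1}"
  define L1 where "L1 s = \<Gamma> (T * s)" for s
  define L4 where "L4 s = (complex_of_real c1 * cis (real p * (T * s) / 2),
             complex_of_real c2 * cis ((real p - 2 * real q) * (T * s) / 2))" for s
  define a where "a s = Im (g (T * s))" for s
  define b where "b s = (real p - 2 * real q) * (T * s) / 2" for s
  have h1: "homotopic_loops ?X L1 (\<lambda>s. (0, cis (a s)))"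
  proof -
    have "homotopic_loops ?X L1 (\<lambda>s. (0, snd (L1 s) / of_real (norm (snd (L1 s)))))"
    proof (rule loop_to_circle)
      show "path L1" unfolding path_def L1_def
        by (rule continuous_on_compose2[OF assms(5)]) (auto intro!: continuous_intros)
      show "pathfinish L1 = pathstart L1" using loopG by (simp add: pathfinish_def pathstart_def L1_def)
      show "L1 s \<in> S3 \<and> snd (L1 s) \<noteq> 0" for s using assms(6) snz by (simp add: L1_def)
    qed
    moreover have "snd (L1 s) / of_real (norm (snd (L1 s))) = cis (a s)" for s
      unfolding L1_def a_def g(2) by (subst exp_eq_polar) simp
    ultimately show ?thesis by simp
  qed
  have h2: "homotopic_loops ?X (\<lambda>s. (0, cis (a s))) (\<lambda>s. (0, cis (b s)))"
  proof (rule circle_loops[where k = m])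
    have "continuous_on {0..1} (\<lambda>s. g (T * s))"
      by (rule continuous_on_compose2[OF g(1)]) (auto intro!: continuous_intros)
    then show "continuous_on {0..1} a" unfolding a_def by (intro continuous_intros)
    show "continuous_on {0..1} b" unfolding b_def by (intro continuous_intros) auto
    show "a 1 = a 0 + 2 * pi * of_int m" unfolding a_def using gT by simp
    show "b 1 = b 0 + 2 * pi * of_int m" unfolding b_def T_def using pm by auto
  qed
  have h3: "homotopic_loops ?X L4 (\<lambda>s. (0, cis (b s)))"
  proof -
    have "homotopic_loops ?X L4 (\<lambda>s. (0, snd (L4 s) / of_real (norm (snd (L4 s)))))"
    proof (rule loop_to_circle)
      show "path L4" unfolding path_def L4_def by (intro continuous_intros) auto
      have pT: "real p * T / 2 = 0 + 2 * pi * of_int (if even p then int p div 2 else int p)"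
        unfolding T_def by (cases "even p") (auto simp: real_of_nat_div)
      have bT: "(real p - 2 * real q) * T / 2 = 0 + 2 * pi * of_int m"
        unfolding T_def using pm by auto
      show "pathfinish L4 = pathstart L4"
      proof -
        have A: "cis (real p * (T * 1) / 2) = cis (real p * (T * 0) / 2)"
          by (simp only: mult_1_right mult_zero_right mult_zero_left div_0 pT cis_2pi_int)
        have B: "cis ((real p - 2 * real q) * (T * 1) / 2) = cis ((real p - 2 * real q) * (T * 0) / 2)"
          by (simp only: mult_1_right mult_zero_right mult_zero_left div_0 bT cis_2pi_int)
        show ?thesis using A B by (simp add: pathfinish_def pathstart_def L4_def)
      qed
      show "L4 s \<in> S3 \<and> snd (L4 s) \<noteq> 0" for s using assms(8-10)
        by (simp add: L4_def S3_def norm_Pair norm_mult)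
    qed
    moreover have "snd (L4 s) / of_real (norm (snd (L4 s))) = cis (b s)" for s
      using assms(9) by (simp add: L4_def b_def norm_mult)
    ultimately show ?thesis by simp
  qed
  have "homotopic_loops ?X L1 L4"
    using h1 h2 h3 by (meson homotopic_loops_sym homotopic_loops_trans)
  then show ?thesis unfolding Let_def T_def[symmetric] L1_def[abs_def] L4_def[abs_def] .
qed


end
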